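(* There exist absolute constants $C,c>0$ such that for every integer $v\ge0$ and real $\lambda\ge\frac12$: \begin{enumerate} \item if $v\ge\lambda$, then $c(v+\lambda)^{-1}\exp(\Psi_{v,\lambda})\le E_{v,\lambda}\le C(v+\lambda)\exp(\Psi_{v,\lambda})$; \item if $v\le\lambda$, then $c(v+\lambda)^{-1}\exp(\Psi_{v,\lambda})\le E_{v,\lambda}\le C\lambda^{-1/2}\exp(\Psi_{v,\lambda})$. \end{enumerate}
   Context: For integer $v\ge0$ and real $\lambda>0$ define $E_{v,\lambda}=\sum_{n\ge v,\ n-v\in2\mathbb{Z}}\frac{\lambda^n}{2^n n!}\binom{n}{(n-v)/2}$ and $\Psi_{v,\lambda}=\sqrt{v^2+\lambda^2}+v\log\Big(\frac{\sqrt{v^2+\lambda^2}-v}{\lambda}\Big)$ (natural logarithm). *)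

theory Defs
  imports "HOL-Analysis.Analysis"
begin

definition E_fun :: "nat \<Rightarrow> real \<Rightarrow> real" where
  "E_fun v lam = (\<Sum>n. if v \<le> n \<and> even (n - v)
      then lam ^ n / (2 ^ n * fact n) * real (n choose ((n - v) div 2)) else 0)"

definition Psi :: "nat \<Rightarrow> real \<Rightarrow> real" where
  "Psi v lam = sqrt (real v ^ 2 + lam ^ 2)
     + real v * ln ((sqrt (real v ^ 2 + lam ^ 2) - real v) / lam)"

end

theory Submission imports Defs begin

lemma ln_ge_aux:
  fixes x :: real assumes "x \<ge> 0"
  shows "2*x/(2+x) \<le> ln (1+x)"
proof -
  let ?f = "\<lambda>y::real. ln (1+y) - 2*y/(2+y)"
  have "?f 0 \<le> ?f x"
  proof (rule DERIV_nonneg_imp_nondecreasing[OF assms])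
    fix y :: real assume y: "0 \<le> y" "y \<le> x"
    have "DERIV ?f y :> (1/(1+y) - (2*(2+y) - 2*y)/(2+y)^2)"
      using y by (auto intro!: derivative_eq_intros simp: power2_eq_square)
    moreover have "1/(1+y) - (2*(2+y) - 2*y)/(2+y)^2 = y^2/((1+y)*(2+y)^2)"
      proof - have "1+y>0" "2+y>0" "2+2*y>0" using y by auto thus ?thesis by (simp add: divide_simps power2_eq_square) algebra qed
    moreover have "y^2/((1+y)*(2+y)^2) \<ge> 0" using y by simp
    ultimately show "\<exists>z. DERIV ?f y :> z \<and> z \<ge> 0" by auto
  qed
  thus ?thesis by simp
qed

lemma ln_le_aux:
  fixes x :: real assumes "x \<ge> 0"
  shows "ln (1+x) \<le> x*(2+x)/(2+2*x)"
proof -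
  let ?f = "\<lambda>y::real. y*(2+y)/(2+2*y) - ln (1+y)"
  have "?f 0 \<le> ?f x"
  proof (rule DERIV_nonneg_imp_nondecreasing[OF assms])
    fix y :: real assume y: "0 \<le> y" "y \<le> x"
    have "DERIV ?f y :> (((1*(2+y) + y*1)*(2+2*y) - y*(2+y)*2)/(2+2*y)^2 - 1/(1+y))"
      using y by (auto intro!: derivative_eq_intros simp: power2_eq_square)
    moreover have "(((1*(2+y) + y*1)*(2+2*y) - y*(2+y)*2)/(2+2*y)^2 - 1/(1+y)) = y^2/(2*(1+y)^2)"
      proof - have "1+y>0" "2+y>0" "2+2*y>0" using y by auto thus ?thesis by (simp add: divide_simps power2_eq_square) algebra qed
    moreover have "y^2/(2*(1+y)^2) \<ge> 0" using y by simp
    ultimately show "\<exists>z. DERIV ?f y :> z \<and> z \<ge> 0" by auto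
  qed
  thus ?thesis by simp
qed

lemma ln_succ_diff: "n \<ge> 1 \<Longrightarrow> ln (real n + 1) - ln (real n) = ln (1 + 1/real n)"
proof -
  assume "n \<ge> 1"
  hence "1 + 1/real n = (real n + 1)/real n" by (simp add: field_simps)
  thus ?thesis using \<open>n\<ge>1\<close> by (simp add: ln_div)
qed

lemma stirl_up: "n \<ge> 1 \<Longrightarrow> ln (fact n) \<le> 1 + ln (real n)/2 + real n * ln (real n) - real n"
proof (induct n rule: nat_induct_at_least)
  case base then show ?case by simp
next
  case (Suc n)
  have L: "ln (real n + 1) - ln (real n) \<ge> 2/(2*real n+1)"
  proof -
    have "2*(1/real n)/(2+1/real n) \<le> ln (1 + 1/real n)" by (rule ln_ge_aux) simp
    moreover have "2*(1/real n)/(2+1/real n) = 2/(2*real n+1)" using Suc by (simp add: field_simps)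
    ultimately show ?thesis using ln_succ_diff[OF Suc(1)] by simp
  qed
  have M: "(real n + 1/2) * (ln (real n + 1) - ln (real n)) \<ge> 1"
  proof -
    have "(real n + 1/2) * (2/(2*real n+1)) = 1" by (simp add: field_simps)
    moreover have "(real n + 1/2) * (2/(2*real n+1)) \<le> (real n + 1/2) * (ln (real n + 1) - ln (real n))"
      by (rule mult_left_mono[OF L]) simp
    ultimately show ?thesis by linarith
  qed
  have "ln (fact (Suc n)) = ln (real n + 1) + ln (fact n)"
    by (simp add: ln_mult add.commute)
  thus ?case using Suc(2) M by (simp add: algebra_simps)
qed

lemma stirl_lo: "n \<ge> 1 \<Longrightarrow> ln (fact n) \<ge> 3/4 + 1/(4*real n) + ln (real n)/2 + real n * ln (real n) - real n"
proof (induct n rule: nat_induct_at_least)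
  case base then show ?case by simp
next
  case (Suc n)
  have L: "ln (real n + 1) - ln (real n) \<le> (2*real n+1)/(2*real n*(real n+1))"
  proof -
    have "ln (1 + 1/real n) \<le> (1/real n)*(2+1/real n)/(2+2*(1/real n))" by (rule ln_le_aux) simp
    moreover have "(1/real n)*(2+1/real n)/(2+2*(1/real n)) = (2*real n+1)/(2*real n*(real n+1))"
    proof -
      have "real n > 0" using Suc by simp
      thus ?thesis by (simp add: divide_simps)
    qed
    ultimately show ?thesis using ln_succ_diff[OF Suc(1)] by simp
  qed
  have M: "(real n + 1/2) * (ln (real n + 1) - ln (real n)) \<le> 1 + 1/(4*real n) - 1/(4*(real n + 1))"
  proof -
    have "(real n + 1/2) * ((2*real n+1)/(2*real n*(real n+1))) = 1 + 1/(4*real n) - 1/(4*(real n + 1))"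
    proof -
      have "real n > 0" using Suc by simp
      thus ?thesis by (simp add: divide_simps) algebra
    qed
    moreover have "(real n + 1/2) * (ln (real n + 1) - ln (real n)) \<le> (real n + 1/2) * ((2*real n+1)/(2*real n*(real n+1)))"
      by (rule mult_left_mono[OF L]) simp
    ultimately show ?thesis by linarith
  qed
  have "ln (fact (Suc n)) = ln (real n + 1) + ln (fact n)"
    by (simp add: ln_mult add.commute)
  thus ?case using Suc(2) M by (simp add: algebra_simps)
qed

lemma exp_half_ln: "x > 0 \<Longrightarrow> exp (ln x / 2) = sqrt (x::real)"
  by (simp add: powr_half_sqrt[symmetric] powr_def)

lemma exp_nat_ln: "x > 0 \<Longrightarrow> exp (real n * ln x) = (x::real) ^ n"
  by (metis powr_def powr_realpow less_irrefl mult.commute)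

lemma stirl_exp_form: "n \<ge> 1 \<Longrightarrow> exp (c + ln (real n)/2 + real n * ln (real n) - real n)
   = exp c * sqrt (real n) * real n ^ n * exp (- real n)"
proof -
  assume n: "n \<ge> 1"
  have "exp (c + ln (real n)/2 + real n * ln (real n) - real n) = exp c * exp (ln (real n)/2) * exp (real n * ln (real n)) * exp (- real n)"
    by (simp only: diff_conv_add_uminus exp_add)
  thus ?thesis using n by (simp add: exp_half_ln exp_nat_ln)
qed

lemma fact_up: "n \<ge> 1 \<Longrightarrow> fact n \<le> exp 1 * sqrt (real n) * real n ^ n * exp (- real n)"
proof -
  assume n: "n \<ge> 1"
  have "(fact n::real) = exp (ln (fact n))" by (rule exp_ln[symmetric]) simp
  also have "\<dots> \<le> exp (1 + ln (real n)/2 + real n * ln (real n) - real n)"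
    using stirl_up[OF n] by (subst exp_le_cancel_iff)
  finally show ?thesis using stirl_exp_form[OF n] by simp
qed

lemma fact_lo: "n \<ge> 1 \<Longrightarrow> sqrt (real n) * real n ^ n * exp (- real n) \<le> fact n"
proof -
  assume n: "n \<ge> 1"
  have "sqrt (real n) * real n ^ n * exp (- real n) = exp (0 + ln (real n)/2 + real n * ln (real n) - real n)"
    using stirl_exp_form[OF n, of 0] by simp
  also have "\<dots> \<le> exp (ln (fact n))"
  proof (subst exp_le_cancel_iff)
    have "0 \<le> 1/(4*real n)" by simp
    thus "0 + ln (real n)/2 + real n * ln (real n) - real n \<le> ln (fact n)" using stirl_lo[OF n] by linarith
  qed
  also have "\<dots> = fact n" by (rule exp_ln) simp
  finally show ?thesis .
qed

definition pois :: "real \<Rightarrow> nat \<Rightarrow> real" where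
  "pois t j = t ^ j * exp (- t) / fact j"

lemma pois_nonneg: "t \<ge> 0 \<Longrightarrow> pois t j \<ge> 0"
  by (simp add: pois_def)

lemma pois_rec: "pois t (Suc j) = pois t j * t / real (Suc j)"
  by (simp add: pois_def field_simps)

lemma pois_sums: "pois t sums 1"
proof -
  have "(\<lambda>n. t ^ n /\<^sub>R fact n * exp (- t)) sums (exp t * exp (-t))"
    by (rule sums_mult2[OF exp_converges])
  moreover have "(\<lambda>n. t ^ n /\<^sub>R fact n * exp (- t)) = pois t"
    by (auto simp: pois_def fun_eq_iff field_simps)
  ultimately show ?thesis by (simp add: exp_minus)
qed

lemma pois_low: assumes "t \<ge> 0" shows "pois t (nat \<lfloor>t\<rfloor>) \<ge> exp (-2) / sqrt (t+1)"
proof -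
  define j where "j = nat \<lfloor>t\<rfloor>"
  have j1: "real j \<le> t" "t < real j + 1" using assms unfolding j_def by linarith+
  show ?thesis
  proof (cases "j = 0")
    case True
    hence "pois t j = exp (-t)" by (simp add: pois_def)
    moreover have "exp (-t) \<ge> exp (-1)" using j1 True by simp
    moreover have "exp (-2) / sqrt (t+1) \<le> exp (-2)"
      using assms by (simp add: divide_le_eq)
    moreover have "exp (-2) \<le> exp (-1::real)" by simp
    ultimately show ?thesis unfolding j_def[symmetric] by linarith
  next
    case False
    hence jpos: "j \<ge> 1" by simp
    have "real j ^ j \<le> t ^ j" using j1 by (simp add: power_mono)
    moreover have "exp (- (real j + 1)) \<le> exp (-t)" using j1 by simp
    ultimately have num: "real j ^ j * exp (- (real j + 1)) \<le> t ^ j * exp (-t)"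
      by (rule mult_mono) (use assms in auto)
    have F: "fact j \<le> exp 1 * sqrt (real j) * real j ^ j * exp (- real j)" by (rule fact_up[OF jpos])
    have "exp (-2) / sqrt (real j) = real j ^ j * exp (- (real j + 1)) / (exp 1 * sqrt (real j) * real j ^ j * exp (- real j))"
      using jpos by (simp add: exp_add exp_diff exp_minus field_simps) (simp add: exp_add[symmetric])
    also have "\<dots> \<le> real j ^ j * exp (- (real j + 1)) / fact j"
      by (rule divide_left_mono[OF F]) (use jpos in auto)
    also have "\<dots> \<le> t ^ j * exp (-t) / fact j"
      by (rule divide_right_mono[OF num]) simp
    finally have A: "exp (-2) / sqrt (real j) \<le> pois t j" by (simp add: pois_def)
    have "exp (-2) / sqrt (t+1) \<le> exp (-2) / sqrt (real j)"
      using jpos j1 by (intro divide_left_mono) auto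
    with A show ?thesis unfolding j_def by simp
  qed
qed

lemma pois_mode: assumes "t \<ge> 0" shows "pois t j \<le> pois t (nat \<lfloor>t\<rfloor>)"
proof -
  define m where "m = nat \<lfloor>t\<rfloor>"
  have m1: "real m \<le> t" "t < real m + 1" using assms unfolding m_def by linarith+
  have up: "d \<le> m \<Longrightarrow> pois t (m - d) \<le> pois t m" for d
  proof (induct d)
    case 0 then show ?case by simp
  next
    case (Suc d)
    define i where "i = m - Suc d"
    have mi: "m - d = Suc i" using Suc(2) unfolding i_def by simp
    have "real (Suc i) \<le> t" using Suc(2) m1 unfolding i_def by simp
    hence "t / real (Suc i) \<ge> 1" by simp
    hence "pois t i * 1 \<le> pois t i * (t / real (Suc i))"
      by (intro mult_left_mono) (use pois_nonneg[OF assms] in auto)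
    hence "pois t i \<le> pois t (Suc i)" by (simp add: pois_rec)
    with Suc mi show ?case unfolding i_def[symmetric] by simp
  qed
  have down: "pois t (m + d) \<le> pois t m" for d
  proof (induct d)
    case 0 then show ?case by simp
  next
    case (Suc d)
    have "t \<le> real (Suc (m + d))" using m1 by simp
    hence "t / real (Suc (m+d)) \<le> 1" by simp
    hence "pois t (m+d) * (t / real (Suc (m+d))) \<le> pois t (m+d) * 1"
      by (intro mult_left_mono) (use pois_nonneg[OF assms] in auto)
    hence "pois t (Suc (m+d)) \<le> pois t (m+d)" by (simp add: pois_rec)
    with Suc show ?case by simp
  qed
  show ?thesis
  proof (cases "j \<le> m")
    case True
    then show ?thesis using up[of "m - j"] unfolding m_def by simp
  next
    case False
    then show ?thesis using down[of "j - m"] unfolding m_def by simp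
  qed
qed

lemma xpow_le: assumes "t > 0" "m \<ge> 1"
  shows "t ^ m * exp (-t) \<le> real m ^ m * exp (- real m)"
proof -
  have mpos: "real m > 0" using assms by simp
  have "ln (t / real m) \<le> t / real m - 1" by (rule ln_le_minus_one) (use assms mpos in simp)
  hence "real m * ln (t / real m) \<le> real m * (t / real m - 1)" by (intro mult_left_mono) auto
  moreover have "real m * (t / real m - 1) = t - real m" using mpos by (simp add: field_simps)
  moreover have "ln (t / real m) = ln t - ln (real m)" using mpos assms by (simp add: ln_div)
  ultimately have "real m * (ln t - ln (real m)) \<le> t - real m" by simp
  hence "real m * ln t - t \<le> real m * ln (real m) - real m" by (simp add: algebra_simps)
  hence "exp (real m * ln t - t) \<le> exp (real m * ln (real m) - real m)" by simp
  thus ?thesis using assms mpos by (simp add: exp_diff exp_nat_ln exp_minus field_simps)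
qed

lemma pois_max: assumes "t > 0" shows "pois t j \<le> 2 / sqrt t"
proof -
  define m where "m = nat \<lfloor>t\<rfloor>"
  have m1: "real m \<le> t" "t < real m + 1" using assms unfolding m_def by linarith+
  have P: "pois t j \<le> pois t m" using pois_mode[of t j] assms unfolding m_def by simp
  show ?thesis
  proof (cases "m = 0")
    case True
    hence "pois t m = exp (-t)" by (simp add: pois_def)
    also have "\<dots> \<le> 1" using assms by simp
    also have "1 \<le> 2 / sqrt t"
    proof -
      have "sqrt t \<le> 1" using m1 True by simp
      hence "sqrt t \<le> 2" by linarith
      thus ?thesis using assms by (simp add: le_divide_eq)
    qed
    finally show ?thesis using P by simp
  next
    case False
    hence m0: "m \<ge> 1" by simp
    have "pois t m \<le> real m ^ m * exp (- real m) / fact m"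
      unfolding pois_def by (rule divide_right_mono[OF xpow_le[OF assms m0]]) simp
    also have "\<dots> \<le> real m ^ m * exp (- real m) / (sqrt (real m) * real m ^ m * exp (- real m))"
      by (rule divide_left_mono[OF fact_lo[OF m0]]) (use m0 in auto)
    also have "\<dots> = 1 / sqrt (real m)" using m0 by simp
    also have "\<dots> \<le> 2 / sqrt t"
    proof -
      have "t \<le> 4 * real m" using m1 m0 by linarith
      hence "sqrt t \<le> sqrt (4 * real m)" by simp
      also have "\<dots> = 2 * sqrt (real m)" by (simp add: real_sqrt_mult)
      finally have "sqrt t \<le> 2 * sqrt (real m)" .
      thus ?thesis using m0 assms by (simp add: divide_simps)
    qed
    finally show ?thesis using P by simp
  qed
qed

lemma pois_le1: assumes "t \<ge> 0" shows "pois t j \<le> 1"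
proof -
  have "sum (pois t) {j} \<le> suminf (pois t)"
    by (rule sum_le_suminf) (use sums_summable[OF pois_sums] pois_nonneg[OF assms] in auto)
  thus ?thesis using sums_unique[OF pois_sums] by simp
qed

lemma rearr: "(X::real) * Q * (A * EA / F1 * (B * EB / F2)) = (X * EA * EB) * (Q * A * B) / (F2 * F1)"
  by (simp add: mult_ac)

lemma key:
  fixes v :: nat and lam :: real
  assumes lam: "lam \<ge> 1/2"
  shows "exp (-4) / 5 * exp (Psi v lam) / (real v + lam) \<le> E_fun v lam"
    and "E_fun v lam \<le> exp (Psi v lam)"
    and "E_fun v lam \<le> 4 * lam powr (-1/2) * exp (Psi v lam)"
proof -
  define s where "s = sqrt (real v ^ 2 + lam ^ 2)"
  define a where "a = (s + real v)/2"
  define b where "b = (s - real v)/2"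
  define q where "q = (s - real v)/lam"
  have lpos: "lam > 0" using lam by simp
  have s2: "s^2 = real v ^ 2 + lam ^ 2" unfolding s_def by simp
  have s0: "s \<ge> 0" unfolding s_def by simp
  have svl: "s > real v"
  proof -
    have "sqrt (real v ^ 2) < s" unfolding s_def using lpos by (intro real_sqrt_less_mono) simp
    thus ?thesis by simp
  qed
  have sl: "s \<ge> lam"
  proof -
    have "sqrt (lam ^ 2) \<le> s" unfolding s_def by (intro real_sqrt_le_mono) simp
    thus ?thesis using lpos by simp
  qed
  have sle: "s \<le> real v + lam"
  proof -
    have "s \<le> sqrt ((real v + lam)^2)" unfolding s_def using lpos
      by (intro real_sqrt_le_mono) (simp add: power2_eq_square algebra_simps)
    thus ?thesis using lpos by simp
  qed
  have apos: "a > 0" and bpos: "b > 0" using svl s0 unfolding a_def b_def by auto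
  have aeq: "a = b + real v" unfolding a_def b_def by (simp add: field_simps)
  have ab: "a * b = lam^2/4" unfolding a_def b_def using s2
    by (simp add: field_simps power2_eq_square)
  have qpos: "q > 0" unfolding q_def using svl lpos by simp
  have qa: "q * a = lam/2"
  proof -
    have "q * a = (s^2 - real v^2) / (2*lam)" unfolding q_def a_def using lpos
      by (simp add: field_simps power2_eq_square)
    thus ?thesis using s2 lpos by (simp add: power2_eq_square)
  qed
  have expPsi: "exp (Psi v lam) = exp s * q ^ v"
    unfolding Psi_def s_def[symmetric] q_def[symmetric] using qpos
    by (simp add: exp_add exp_nat_ln)
  define f where "f n = (if v \<le> n \<and> even (n - v)
      then lam ^ n / (2 ^ n * fact n) * real (n choose ((n - v) div 2)) else 0)" for n
  define g where "g k = pois a (v + k) * pois b k" for k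
  have g0: "g k \<ge> 0" for k unfolding g_def using apos bpos by (simp add: pois_nonneg)
  have gle: "g k \<le> pois b k" for k
    unfolding g_def using mult_right_mono[OF pois_le1[of a "v+k"] pois_nonneg[of b k]] apos bpos
    by simp
  have sumb: "summable (pois b)" using pois_sums by (rule sums_summable)
  have sumg: "summable g"
    by (rule summable_comparison_test[OF _ sumb]) (use g0 gle in auto)
  define T where "T = suminf g"
  have tm: "f (v + 2*k) = exp (Psi v lam) * g k" for k
  proof -
    have c: "(v + 2*k - v) div 2 = k" by simp
    have ch: "real ((v + 2*k) choose k) = fact (v+2*k) / (fact k * fact (v+k))"
      by (subst binomial_fact) (auto simp: algebra_simps)
    have "f (v + 2*k) = lam ^ (v+2*k) / (2 ^ (v+2*k) * fact (v+2*k)) * (fact (v+2*k) / (fact k * fact (v+k)))"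
      unfolding f_def using c ch by simp
    also have "\<dots> = (lam/2) ^ (v+2*k) / (fact k * fact (v+k))"
      by (simp add: power_divide field_simps)
    finally have F: "f (v + 2*k) = (lam/2) ^ (v+2*k) / (fact k * fact (v+k))" .
    have P: "q^v * a^(v+k) * b^k = (lam/2)^(v+2*k)"
    proof -
      have "q^v * a^(v+k) * b^k = (q*a)^v * (a*b)^k" by (simp add: power_add power_mult_distrib)
      also have "\<dots> = (lam/2)^v * ((lam/2)^2)^k" unfolding qa ab by (simp add: power_divide)
      also have "\<dots> = (lam/2)^(v+2*k)" by (simp add: power_add power_mult)
      finally show ?thesis .
    qed
    have E1: "exp s * exp (-a) * exp (-b) = 1"
    proof -
      have "exp s * exp (-a) * exp (-b) = exp (s + (-a) + (-b))" by (simp only: exp_add)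
      also have "s + (-a) + (-b) = 0" unfolding a_def b_def by (simp add: field_simps)
      finally show ?thesis by simp
    qed
    have "exp (Psi v lam) * g k = (exp s * exp (-a) * exp (-b)) * (q^v * a^(v+k) * b^k) / (fact k * fact (v+k))"
      unfolding expPsi g_def pois_def by (rule rearr)
    also have "\<dots> = (lam/2) ^ (v+2*k) / (fact k * fact (v+k))" using E1 P by simp
    finally show ?thesis using F by simp
  qed
  have gs: "g sums T" unfolding T_def using sumg by (simp add: summable_sums)
  have "(\<lambda>k. f (v + 2*k)) sums (exp (Psi v lam) * T)"
    unfolding tm by (rule sums_mult[OF gs])
  hence fs: "f sums (exp (Psi v lam) * T)"
  proof (subst (asm) sums_mono_reindex)
    show "strict_mono (\<lambda>k. v + 2*k)" by (rule strict_monoI) simp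
    fix n assume nr: "n \<notin> range (\<lambda>k. v + 2*k)"
    show "f n = 0"
    proof (rule ccontr)
      assume "f n \<noteq> 0"
      hence c: "v \<le> n" "even (n - v)" unfolding f_def by (auto split: if_splits)
      from c(2) obtain k where "n - v = 2*k" by (rule evenE)
      hence "n = v + 2*k" using c by simp
      with nr show False by auto
    qed
  qed
  have Eeq: "E_fun v lam = exp (Psi v lam) * T"
    using sums_unique[OF fs] unfolding E_fun_def f_def by simp
  have ePos: "exp (Psi v lam) > 0" by simp
  have T1: "T \<le> 1"
  proof -
    have "T \<le> suminf (pois b)" unfolding T_def by (rule suminf_le[OF gle sumg sumb])
    thus ?thesis using sums_unique[OF pois_sums] by simp
  qed
  show "E_fun v lam \<le> exp (Psi v lam)" unfolding Eeq using T1 ePos by simp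
  have T2: "T \<le> 2 / sqrt a"
  proof -
    have ms: "(\<lambda>k. (2 / sqrt a) * pois b k) sums ((2 / sqrt a) * 1)"
      by (rule sums_mult[OF pois_sums])
    have "g k \<le> (2 / sqrt a) * pois b k" for k
      unfolding g_def using mult_right_mono[OF pois_max[OF apos, of "v+k"] pois_nonneg[of b k]] bpos
      by simp
    hence "T \<le> suminf (\<lambda>k. (2 / sqrt a) * pois b k)"
      unfolding T_def by (intro suminf_le sumg sums_summable[OF ms])
    thus ?thesis using sums_unique[OF ms] by simp
  qed
  have "2 / sqrt a \<le> 4 * lam powr (-1/2)"
  proof -
    have v0: "real v \<ge> 0" by simp
    have "4 * a = 2 * s + 2 * real v" unfolding a_def by simp
    hence "lam \<le> 4 * a" using sl lpos v0 by linarith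
    hence "sqrt lam \<le> sqrt (4*a)" by simp
    hence "sqrt lam \<le> 2 * sqrt a" by (simp add: real_sqrt_mult)
    hence "2 / sqrt a \<le> 4 / sqrt lam" using lpos apos by (simp add: divide_simps)
    moreover have "lam powr (-1/2) = 1 / sqrt lam" using lpos
      by (simp add: powr_minus_divide powr_half_sqrt)
    ultimately show ?thesis by simp
  qed
  with T2 have "T \<le> 4 * lam powr (-1/2)" by simp
  thus "E_fun v lam \<le> 4 * lam powr (-1/2) * exp (Psi v lam)" unfolding Eeq using ePos
    by (simp add: mult.commute)
  define k0 where "k0 = nat \<lfloor>b\<rfloor>"
  have fa: "nat \<lfloor>a\<rfloor> = v + k0"
  proof -
    have "\<lfloor>a\<rfloor> = \<lfloor>b\<rfloor> + int v" unfolding aeq by (simp add: floor_add_int[symmetric])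
    moreover have "\<lfloor>b\<rfloor> \<ge> 0" using bpos by simp
    ultimately show ?thesis unfolding k0_def by (simp add: nat_add_distrib)
  qed
  have Tg: "g k0 \<le> T"
  proof -
    have "sum g {k0} \<le> T" unfolding T_def by (rule sum_le_suminf[OF sumg]) (use g0 in auto)
    thus ?thesis by simp
  qed
  have la: "pois a (v+k0) \<ge> exp (-2) / sqrt (a+1)" using pois_low[of a] apos fa by simp
  have lb: "pois b k0 \<ge> exp (-2) / sqrt (b+1)" using pois_low[of b] bpos unfolding k0_def by simp
  have "exp (-2) / sqrt (a+1) * (exp (-2) / sqrt (b+1)) \<le> g k0"
    unfolding g_def by (rule mult_mono[OF la lb]) (use apos bpos pois_nonneg in auto)
  moreover have "exp (-2) / sqrt (a+1) * (exp (-2) / sqrt (b+1)) = exp (-4) / sqrt ((a+1)*(b+1))"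
    by (simp add: real_sqrt_mult exp_add[symmetric])
  moreover have "sqrt ((a+1)*(b+1)) \<le> ((a+1)+(b+1))/2"
    by (rule arith_geo_mean_sqrt) (use apos bpos in auto)
  moreover have "((a+1)+(b+1))/2 \<le> 5 * (real v + lam)"
  proof -
    have "((a+1)+(b+1))/2 = s/2 + 1" unfolding a_def b_def by (simp add: field_simps)
    moreover have "real v \<ge> 0" by simp
    ultimately show ?thesis using sle lam by (simp add: field_simps)
  qed
  moreover have "sqrt ((a+1)*(b+1)) > 0" using apos bpos by simp
  ultimately have "exp (-4) / (5 * (real v + lam)) \<le> T"
    using Tg by (smt (verit) divide_left_mono exp_gt_zero mult_pos_pos)
  hence "exp (-4) / 5 / (real v + lam) * exp (Psi v lam) \<le> T * exp (Psi v lam)"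
    by (intro mult_right_mono) auto
  thus "exp (-4) / 5 * exp (Psi v lam) / (real v + lam) \<le> E_fun v lam"
    unfolding Eeq by (simp add: field_simps)
qed

theorem proposition4p2:
  shows "\<exists>C c :: real. C > 0 \<and> c > 0 \<and>
    (\<forall>(v::nat) (lam::real). lam \<ge> 1/2 \<longrightarrow>
      (real v \<ge> lam \<longrightarrow>
         c * exp (Psi v lam) / (real v + lam) \<le> E_fun v lam \<and>
         E_fun v lam \<le> C * (real v + lam) * exp (Psi v lam)) \<and>
      (real v \<le> lam \<longrightarrow>
         c * exp (Psi v lam) / (real v + lam) \<le> E_fun v lam \<and>
         E_fun v lam \<le> C * lam powr (-1/2) * exp (Psi v lam)))"
proof -
  have H: "(real v \<ge> lam \<longrightarrow>
         exp (-4) / 5 * exp (Psi v lam) / (real v + lam) \<le> E_fun v lam \<and>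
         E_fun v lam \<le> 4 * (real v + lam) * exp (Psi v lam)) \<and>
      (real v \<le> lam \<longrightarrow>
         exp (-4) / 5 * exp (Psi v lam) / (real v + lam) \<le> E_fun v lam \<and>
         E_fun v lam \<le> 4 * lam powr (-1/2) * exp (Psi v lam))"
    if lam: "lam \<ge> 1/2" for v :: nat and lam :: real
  proof (intro conjI impI)
    show "exp (-4) / 5 * exp (Psi v lam) / (real v + lam) \<le> E_fun v lam"
      using key(1)[OF lam] .
    show "exp (-4) / 5 * exp (Psi v lam) / (real v + lam) \<le> E_fun v lam"
      using key(1)[OF lam] .
    show "E_fun v lam \<le> 4 * lam powr (-1/2) * exp (Psi v lam)"
      using key(3)[OF lam] .
    assume vl: "real v \<ge> lam"
    have "1 \<le> 4 * (real v + lam)" using vl lam by simp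
    hence "1 * exp (Psi v lam) \<le> 4 * (real v + lam) * exp (Psi v lam)"
      by (intro mult_right_mono) auto
    hence "exp (Psi v lam) \<le> 4 * (real v + lam) * exp (Psi v lam)" by simp
    thus "E_fun v lam \<le> 4 * (real v + lam) * exp (Psi v lam)"
      by (rule order_trans[OF key(2)[OF lam]])
  qed
  show ?thesis
    by (rule exI[of _ 4], rule exI[of _ "exp (-4) / 5"]) (use H in simp)
qed

end
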